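(* Let $F$ be the uniform distribution on $[0,1]$, $d\ge2$, and let $G$ be a $d$-regular bipartite graph with $n/2$ vertices $L$ on one side and $n/2$ vertices $R$ on the other. Then: (i) the vector with $T_i=1/2$ for $i\in L$ and $T_i=2^{d-1}$ for $i\in R$ lies in $\mathcal{N}_{(1/2)\cdot\mathbf{1}}$ and has revenue $n/8$; (ii) for every uniform price $p'>0$, $\inf_{\mathbf{T}\in\mathcal{N}_{p'\cdot\mathbf{1}}}\mathcal{R}(p'\cdot\mathbf{1},\mathbf{T})\le n/d$; hence the ratio between the best equilibrium revenue and the best worst-case uniform-price revenue can be at least $d/8$; (iii) for the non-uniform price vector with $p_i=1/2$ for $i\in L$ and $p_i=1$ for $i\in R$, the equilibrium set consists of a single equilibrium (up to thresholds above $1$ for buyers in $R$, which never buy), with revenue $n/8$.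
   Context: Public-goods pricing game: $n$ buyers are the vertices of an undirected graph $G=([n],E)$; $N(i)=\{j:(i,j)\in E\}$ (so $i\notin N(i)$). Values i.i.d. with cumulative distribution function $F$; for the uniform distribution $F(x)=\min\{1,x\}$ for $x\ge0$, $F(\infty)=1$. An equilibrium for price vector $\mathbf{p}$ is $\mathbf{T}\in[0,\infty]^n$ (buyer $i$ purchases iff $v_i\ge T_i$) with $T_i=p_i/\prod_{j\in N(i)}F(T_j)$ for all $i$; $\mathcal{N}_{\mathbf{p}}$ is the set of equilibria; $\mathcal{R}(\mathbf{p},\mathbf{T})=\sum_ip_i(1-F(T_i))$; $p\cdot\mathbf{1}$ is the uniform price vector. *)

theory Defs
  imports "HOL-Analysis.Analysis"
begin

text \<open>Buyers are the vertices 0..<n; the graph is a relation E restricted to them.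
Thresholds live in [0,\<infinity>] = ennreal.\<close>

definition nbrs :: "nat \<Rightarrow> (nat \<Rightarrow> nat \<Rightarrow> bool) \<Rightarrow> nat \<Rightarrow> nat set" where
  "nbrs n E i = {j. j < n \<and> E i j}"

definition F_unif :: "ennreal \<Rightarrow> real" where
  "F_unif x = enn2real (min 1 x)"

text \<open>Equilibria for price vector p: T_i = p_i / prod_{j in N(i)} F(T_j) for all buyers i
(in ennreal, p/0 = \<infinity> for p > 0).\<close>
definition equilibria ::
  "nat \<Rightarrow> (nat \<Rightarrow> nat \<Rightarrow> bool) \<Rightarrow> (ennreal \<Rightarrow> real) \<Rightarrow> (nat \<Rightarrow> real) \<Rightarrow> (nat \<Rightarrow> ennreal) set" where
  "equilibria n E F p = {T. \<forall>i<n. T i = ennreal (p i) / ennreal (\<Prod>j\<in>nbrs n E i. F (T j))}"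

definition revenue :: "nat \<Rightarrow> (ennreal \<Rightarrow> real) \<Rightarrow> (nat \<Rightarrow> real) \<Rightarrow> (nat \<Rightarrow> ennreal) \<Rightarrow> real" where
  "revenue n F p T = (\<Sum>i<n. p i * (1 - F (T i)))"

end

theory Submission
  imports Defs
begin

lemma F_ennreal: "0 \<le> x \<Longrightarrow> F_unif (ennreal x) = min 1 x"
  unfolding F_unif_def
  by (metis ennreal_1 min_ennreal zero_le_one enn2real_ennreal min.bounded_iff)

lemma F_ge1: "1 \<le> x \<Longrightarrow> F_unif x = 1"
  unfolding F_unif_def by (simp add: min_def)

lemma F_bounds: "0 \<le> F_unif x \<and> F_unif x \<le> 1"
  unfolding F_unif_def by (auto intro!: enn2real_leI)

lemma geo_bound:
  fixes t :: real assumes "0 \<le> t" "t \<le> 1"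
  shows "t ^ d * (1 - t) * (real d + 1) \<le> 1"
proof -
  have s: "(\<Sum>k<Suc d. t ^ k) \<ge> (\<Sum>k<Suc d. t ^ d)"
    by (rule sum_mono) (simp add: assms power_decreasing)
  have "t ^ d * (1 - t) * (real d + 1) = (1 - t) * (\<Sum>k<Suc d. t ^ d)" by simp
  also have "\<dots> \<le> (1 - t) * (\<Sum>k<Suc d. t ^ k)"
    using s assms by (intro mult_left_mono) auto
  also have "\<dots> = 1 - t ^ Suc d" by (rule one_diff_power_eq[symmetric])
  also have "\<dots> \<le> 1" using assms by simp
  finally show ?thesis .
qed

theorem mainTheorem11:
  fixes n d :: nat and E :: "nat \<Rightarrow> nat \<Rightarrow> bool" and L R :: "nat set"
  assumes d2: "d \<ge> 2"
    and sym: "\<And>i j. E i j \<Longrightarrow> E j i"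
    and irrefl: "\<And>i. \<not> E i i"
    and parts: "L \<union> R = {..<n}" "L \<inter> R = {}" "2 * card L = n" "2 * card R = n"
    and bip: "\<And>i j. i < n \<Longrightarrow> j < n \<Longrightarrow> E i j \<Longrightarrow> (i \<in> L \<longleftrightarrow> j \<in> R)"
    and reg: "\<And>i. i < n \<Longrightarrow> card (nbrs n E i) = d"
  shows
    "(\<lambda>i. if i \<in> L then 1/2 else 2 ^ (d - 1)) \<in> equilibria n E F_unif (\<lambda>_. 1/2)
     \<and> revenue n F_unif (\<lambda>_. 1/2) (\<lambda>i. if i \<in> L then 1/2 else 2 ^ (d - 1)) = real n / 8
     \<and> (\<forall>p'::real. p' > 0 \<longrightarrow>
          (INF T\<in>equilibria n E F_unif (\<lambda>_. p'). ereal (revenue n F_unif (\<lambda>_. p') T))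
            \<le> ereal (real n / real d))
     \<and> (let p = (\<lambda>i. if i \<in> L then 1/2 else 1) in
          equilibria n E F_unif p \<noteq> {}
          \<and> (\<forall>T\<in>equilibria n E F_unif p.
               (\<forall>i\<in>L. T i = 1/2) \<and> (\<forall>i\<in>R. T i \<ge> 1)
               \<and> revenue n F_unif p T = real n / 8))"
proof -
  have finN: "finite (nbrs n E i)" for i
    by (rule finite_subset[of _ "{..<n}"]) (auto simp: nbrs_def)
  have LN: "i \<in> L \<Longrightarrow> nbrs n E i \<subseteq> R" for i
    using parts bip by (auto simp: nbrs_def)
  have RN: "i \<in> R \<Longrightarrow> nbrs n E i \<subseteq> L" for i
  proof
    fix x assume iR: "i \<in> R" and x: "x \<in> nbrs n E i"
    have "i < n" "i \<notin> L" using iR parts by auto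
    moreover have "x < n" "E i x" using x by (auto simp: nbrs_def)
    ultimately have "x \<notin> R" using bip by blast
    then show "x \<in> L" using \<open>x < n\<close> parts by auto
  qed
  have Ln: "i \<in> L \<Longrightarrow> i < n" for i using parts by auto
  have Rn: "i \<in> R \<Longrightarrow> i < n" for i using parts by auto
  have LR: "i < n \<Longrightarrow> i \<in> L \<or> i \<in> R" for i using parts by auto
  have notL: "i \<in> R \<Longrightarrow> i \<notin> L" for i using parts by auto
  have prodc: "i < n \<Longrightarrow> (\<forall>j\<in>nbrs n E i. f j = c) \<Longrightarrow> (\<Prod>j\<in>nbrs n E i. f j) = c ^ d"
    for i and f :: "nat \<Rightarrow> real" and c
    using reg[of i] by (simp add: prod.cong[OF refl, of _ f "\<lambda>_. c"])
  have finL: "finite L" "finite R" using parts by (metis finite_Un finite_lessThan)+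
  have sumsplit: "(\<Sum>i<n. g i) = (\<Sum>i\<in>L. g i) + (\<Sum>i\<in>R. g i)" for g :: "nat \<Rightarrow> real"
    using parts finL by (metis sum.union_disjoint)
  have d1: "(1::real) \<le> 2 ^ (d - 1)" by simp
  have h12: "(1/2::ennreal) = ennreal (1/2)" using divide_ennreal[of 1 2] by simp
  have h2: "(2::ennreal)^(d-1) = ennreal (2^(d-1))" using ennreal_power[of 2 "d-1"] by simp
  have F12: "F_unif (1/2) = 1/2" unfolding h12 by (subst F_ennreal) auto
  define T1 :: "nat \<Rightarrow> ennreal" where "T1 = (\<lambda>i. if i \<in> L then 1/2 else 2 ^ (d - 1))"
  have FT1: "F_unif (T1 j) = (if j \<in> L then 1/2 else 1)" for j
  proof (cases "j \<in> L")
    case True then show ?thesis using F12 by (simp add: T1_def)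
  next
    case False
    have "(1::ennreal) \<le> ennreal (2^(d-1))" using d1 by simp
    then show ?thesis using False F_ge1 h2 by (simp add: T1_def)
  qed
  have part1: "T1 \<in> equilibria n E F_unif (\<lambda>_. 1/2)"
    unfolding equilibria_def
  proof (intro CollectI allI impI)
    fix i assume i: "i < n"
    show "T1 i = ennreal (1/2) / ennreal (\<Prod>j\<in>nbrs n E i. F_unif (T1 j))"
    proof (cases "i \<in> L")
      case True
      have "(\<Prod>j\<in>nbrs n E i. F_unif (T1 j)) = 1 ^ d"
        using LN[OF True] notL FT1 by (intro prodc[OF i]) auto
      then show ?thesis using True h12 by (simp add: T1_def divide_ennreal_def)
    next
      case False
      then have iR: "i \<in> R" using LR i by auto
      have "(\<Prod>j\<in>nbrs n E i. F_unif (T1 j)) = (1/2) ^ d"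
        using RN[OF iR] FT1 by (intro prodc[OF i]) auto
      moreover have "(1/2::real) / (1/2)^d = 2^(d-1)"
        using d2 by (cases d) (auto simp: power_divide)
      moreover have "ennreal (1/2) / ennreal ((1/2)^d) = ennreal ((1/2)/(1/2)^d)"
        by (rule divide_ennreal) auto
      ultimately show ?thesis using False h2
        by (simp only: T1_def if_False)
    qed
  qed
  have rev1: "revenue n F_unif (\<lambda>_. 1/2) T1 = real n / 8"
  proof -
    have "revenue n F_unif (\<lambda>_. 1/2) T1 = (\<Sum>i\<in>L. 1/4) + (\<Sum>i\<in>R. 0)"
      unfolding revenue_def sumsplit using notL
      by (intro arg_cong2[where f="(+)"] sum.cong) (auto simp: FT1)
    then show ?thesis using parts by simp
  qed
  have part2: "\<forall>p'::real. p' > 0 \<longrightarrow>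
          (INF T\<in>equilibria n E F_unif (\<lambda>_. p'). ereal (revenue n F_unif (\<lambda>_. p') T))
            \<le> ereal (real n / real d)"
  proof (intro allI impI)
    fix p' :: real assume p: "p' > 0"
    have "\<exists>T\<in>equilibria n E F_unif (\<lambda>_. p'). revenue n F_unif (\<lambda>_. p') T \<le> real n / real d"
    proof (cases "p' \<ge> 1")
      case True
      have F1: "F_unif (ennreal p') = 1" using True by (intro F_ge1) simp
      have eq: "(\<lambda>_. ennreal p') \<in> equilibria n E F_unif (\<lambda>_. p')"
        unfolding equilibria_def
      proof (intro CollectI allI impI)
        fix i assume i: "i < n"
        have "(\<Prod>j\<in>nbrs n E i. F_unif (ennreal p')) = 1 ^ d" using F1 by (intro prodc[OF i]) auto
        then show "ennreal p' = ennreal p' / ennreal (\<Prod>j\<in>nbrs n E i. F_unif (ennreal p'))"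
          by (simp add: divide_ennreal_def)
      qed
      have "revenue n F_unif (\<lambda>_. p') (\<lambda>_. ennreal p') = 0" unfolding revenue_def F1 by simp
      then show ?thesis using eq by force
    next
      case False
      define t where "t = root (Suc d) p'"
      have t0: "0 < t" using p by (simp add: t_def)
      have t1: "t < 1" using False by (simp add: t_def real_root_lt_1_iff)
      have tp: "t ^ Suc d = p'" using p unfolding t_def by (metis real_root_pow_pos zero_less_Suc)
      have Ft: "F_unif (ennreal t) = t" using t0 t1 by (subst F_ennreal) auto
      have eq: "(\<lambda>_. ennreal t) \<in> equilibria n E F_unif (\<lambda>_. p')"
        unfolding equilibria_def
      proof (intro CollectI allI impI)
        fix i assume i: "i < n"
        have pr: "(\<Prod>j\<in>nbrs n E i. F_unif (ennreal t)) = t ^ d" using Ft by (intro prodc[OF i]) auto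
        have "ennreal p' / ennreal (t ^ d) = ennreal (p' / t ^ d)"
          using p t0 by (intro divide_ennreal) auto
        moreover have "p' / t ^ d = t" using t0 tp by (simp add: field_simps)
        ultimately show "ennreal t = ennreal p' / ennreal (\<Prod>j\<in>nbrs n E i. F_unif (ennreal t))"
          using pr by simp
      qed
      have rv: "revenue n F_unif (\<lambda>_. p') (\<lambda>_. ennreal t) = real n * (p' * (1 - t))"
        unfolding revenue_def Ft by simp
      have g: "t ^ d * (1 - t) * (real d + 1) \<le> 1" using t0 t1 by (intro geo_bound) auto
      have dpos: "real d > 0" using d2 by simp
      have "p' \<le> t ^ d" using tp t0 t1
        by (metis less_eq_real_def mult_left_le_one_le power_Suc zero_le_power)
      then have a: "p' * (1 - t) \<le> t ^ d * (1 - t)"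
        using t1 by (intro mult_right_mono) auto
      have b: "t ^ d * (1 - t) * real d \<le> 1" using g t0 t1
        by (smt (verit) mult_left_mono mult_nonneg_nonneg zero_le_power)
      have c: "p' * (1 - t) * real d \<le> 1"
        using mult_right_mono[OF a, of "real d"] b by simp
      have "p' * (1 - t) \<le> 1 / real d" using c dpos by (simp add: pos_le_divide_eq)
      then have "real n * (p' * (1 - t)) \<le> real n * (1 / real d)" by (intro mult_left_mono) auto
      then show ?thesis using eq rv by force
    qed
    then obtain T where T: "T \<in> equilibria n E F_unif (\<lambda>_. p')"
      "revenue n F_unif (\<lambda>_. p') T \<le> real n / real d" by blast
    show "(INF T\<in>equilibria n E F_unif (\<lambda>_. p'). ereal (revenue n F_unif (\<lambda>_. p') T))
            \<le> ereal (real n / real d)"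
      using T by (intro INF_lower2[OF T(1)]) auto
  qed
  define p3 :: "nat \<Rightarrow> real" where "p3 = (\<lambda>i. if i \<in> L then 1/2 else 1)"
  have h2d: "(2::real)^d = 1 / (1/2)^d" by (simp add: power_divide)
  define T2 :: "nat \<Rightarrow> ennreal" where "T2 = (\<lambda>i. if i \<in> L then ennreal (1/2) else ennreal (2^d))"
  have FT2: "F_unif (T2 j) = (if j \<in> L then 1/2 else 1)" for j
  proof (cases "j \<in> L")
    case True then show ?thesis by (simp only: T2_def if_True h12[symmetric] F12)
  next
    case False
    have "(1::real) \<le> 2^d" by simp
    then show ?thesis using False by (simp add: T2_def F_ennreal)
  qed
  have eq3: "T2 \<in> equilibria n E F_unif p3"
    unfolding equilibria_def
  proof (intro CollectI allI impI)
    fix i assume i: "i < n"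
    show "T2 i = ennreal (p3 i) / ennreal (\<Prod>j\<in>nbrs n E i. F_unif (T2 j))"
    proof (cases "i \<in> L")
      case True
      have "(\<Prod>j\<in>nbrs n E i. F_unif (T2 j)) = 1 ^ d"
        using LN[OF True] notL FT2 by (intro prodc[OF i]) auto
      then show ?thesis using True by (simp add: T2_def p3_def divide_ennreal_def)
    next
      case False
      then have iR: "i \<in> R" using LR i by auto
      have "(\<Prod>j\<in>nbrs n E i. F_unif (T2 j)) = (1/2) ^ d"
        using RN[OF iR] FT2 by (intro prodc[OF i]) auto
      moreover have "ennreal 1 / ennreal ((1/2)^d) = ennreal (1/(1/2)^d)"
        by (rule divide_ennreal) auto
      ultimately show ?thesis using False h2d
        by (simp only: T2_def p3_def if_False)
    qed
  qed
  have uniq: "(\<forall>i\<in>L. T i = 1/2) \<and> (\<forall>i\<in>R. T i \<ge> 1) \<and> revenue n F_unif p3 T = real n / 8"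
    if T: "T \<in> equilibria n E F_unif p3" for T
  proof -
    have Teq: "T i = ennreal (p3 i) / ennreal (\<Prod>j\<in>nbrs n E i. F_unif (T j))" if "i < n" for i
      using T that unfolding equilibria_def by blast
    have RT: "T i \<ge> 1" if iR: "i \<in> R" for i
    proof -
      define P where "P = (\<Prod>j\<in>nbrs n E i. F_unif (T j))"
      have P0: "0 \<le> P" unfolding P_def using F_bounds by (intro prod_nonneg) auto
      have P1: "P \<le> 1" unfolding P_def using F_bounds by (intro prod_le_1) auto
      have Ti: "T i = ennreal 1 / ennreal P"
        using Teq[OF Rn[OF iR]] notL[OF iR] by (simp add: p3_def P_def)
      show ?thesis
      proof (cases "P = 0")
        case True then show ?thesis using Ti by (simp add: ennreal_divide_zero)
      next
        case False
        have "ennreal 1 / ennreal P = ennreal (1 / P)" using False P0 by (intro divide_ennreal) auto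
        then have "T i = ennreal (1 / P)" using Ti by simp
        moreover have "1 \<le> 1 / P" using False P0 P1 by (simp add: field_simps)
        ultimately show ?thesis by (metis ennreal_1 ennreal_leI)
      qed
    qed
    have FR: "F_unif (T i) = 1" if "i \<in> R" for i using RT[OF that] by (rule F_ge1)
    have LT: "T i = 1/2" if iL: "i \<in> L" for i
    proof -
      have "(\<Prod>j\<in>nbrs n E i. F_unif (T j)) = 1 ^ d"
        using LN[OF iL] FR by (intro prodc[OF Ln[OF iL]]) auto
      then show ?thesis using Teq[OF Ln[OF iL]] iL h12 by (simp add: p3_def divide_ennreal_def)
    qed
    have "revenue n F_unif p3 T = (\<Sum>i\<in>L. 1/4) + (\<Sum>i\<in>R. 0)"
      unfolding revenue_def sumsplit using notL
      by (intro arg_cong2[where f="(+)"] sum.cong) (auto simp: p3_def LT F12 FR)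
    then show ?thesis using parts LT RT by simp
  qed
  have "equilibria n E F_unif p3 \<noteq> {}" using eq3 by blast
  then have part3: "let p = p3 in equilibria n E F_unif p \<noteq> {}
          \<and> (\<forall>T\<in>equilibria n E F_unif p.
               (\<forall>i\<in>L. T i = 1/2) \<and> (\<forall>i\<in>R. T i \<ge> 1)
               \<and> revenue n F_unif p T = real n / 8)"
    using uniq unfolding Let_def by blast
  show ?thesis
    using part1 rev1 part2 part3 unfolding T1_def p3_def by (intro conjI)
qed

end
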